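(* Let $\beta,\theta,\gamma>0$ be such that the Perron root $\lambda(\beta,\theta,\gamma)$ equals $0$, and let $h$ be the associated eigenfunction. Then $h$ is subadditive: $h(m+n)\le h(m)+h(n)$ for all $m,n\in\mathbb{N}_+$.
   Context: For parameters $\beta,\theta,\gamma>0$, $\mathcal{L}f(n)=\beta n(f(n+1)-f(n))-\theta nf(n)+\sum_{j=1}^{n-1}\frac{\gamma n}{j(j+1)}(f(j)+f(n-j)-f(n))$; it generates the first moment semigroup $(M_t)$ of the active cluster-size process of the GFI process ($M_tf(n)$ is the expected sum of $f(\text{size})$ over active clusters at time $t$ when starting from one active cluster, a uniform random recursive tree of size $n$; a cluster of size $n$ is isolated at rate $\theta n$, grows at rate $\beta n$, splits into sizes $n-j,j$ at rate $\gamma n/(j(j+1))$). The Perron root $\lambda$ and eigenfunction $h$ are the unique real number and positive function $h:\mathbb{N}_+\to(0,\infty)$, bounded above and below by positive constants, with $M_th=e^{\lambda t}h$ for all $t$, normalized by $\sum_n\pi(n)h(n)=1$ where $\pi$ is the probability vector with $\pi M_t=e^{\lambda t}\pi$. *)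

theory Defs
  imports "HOL-Analysis.Analysis"
begin

text \<open>The generator L of the first moment semigroup, acting on functions on the
  positive integers (the value at 0 is never used).\<close>
definition gfi_gen :: "real \<Rightarrow> real \<Rightarrow> real \<Rightarrow> (nat \<Rightarrow> real) \<Rightarrow> nat \<Rightarrow> real" where
  "gfi_gen \<beta> \<theta> \<gamma> f n =
     \<beta> * real n * (f (n + 1) - f n) - \<theta> * real n * f n
     + (\<Sum>j = 1..n - 1. \<gamma> * real n / (real j * (real j + 1)) * (f j + f (n - j) - f n))"

definition gen_entry :: "real \<Rightarrow> real \<Rightarrow> real \<Rightarrow> nat \<Rightarrow> nat \<Rightarrow> real" where
  "gen_entry \<beta> \<theta> \<gamma> n k = gfi_gen \<beta> \<theta> \<gamma> (\<lambda>m. if m = k then 1 else 0) n"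

text \<open>Mild (integral) form of the backward Kolmogorov equation for the kernel
  M_t(n,m):  M_t(n,m) = delta_{nm} e^{L(n,n) t}
     + int_0^t e^{L(n,n) s} sum_{k >= 1, k \<noteq> n} L(n,k) M_{t-s}(k,m) ds.\<close>
definition mild_op ::
  "real \<Rightarrow> real \<Rightarrow> real \<Rightarrow> (real \<Rightarrow> nat \<Rightarrow> nat \<Rightarrow> ennreal) \<Rightarrow> (real \<Rightarrow> nat \<Rightarrow> nat \<Rightarrow> ennreal)" where
  "mild_op \<beta> \<theta> \<gamma> K = (\<lambda>t n m.
     ennreal (if n = m then exp (gen_entry \<beta> \<theta> \<gamma> n n * t) else 0)
     + (\<integral>\<^sup>+ s\<in>{0..t}. ennreal (exp (gen_entry \<beta> \<theta> \<gamma> n n * s)) *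
          (\<Sum>k. if 1 \<le> k \<and> k \<noteq> n then ennreal (gen_entry \<beta> \<theta> \<gamma> n k) * K (t - s) k m else 0)
        \<partial>lborel))"

text \<open>The first moment kernel: the minimal nonnegative solution of the mild backward
  equation (the expected number of active clusters of size m at time t, starting
  from one active cluster of size n).\<close>
definition moment_kernel :: "real \<Rightarrow> real \<Rightarrow> real \<Rightarrow> real \<Rightarrow> nat \<Rightarrow> nat \<Rightarrow> ennreal" where
  "moment_kernel \<beta> \<theta> \<gamma> = lfp (mild_op \<beta> \<theta> \<gamma>)"

definition moment_sg :: "real \<Rightarrow> real \<Rightarrow> real \<Rightarrow> real \<Rightarrow> (nat \<Rightarrow> real) \<Rightarrow> nat \<Rightarrow> ennreal" where
  "moment_sg \<beta> \<theta> \<gamma> t f n =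
     (\<Sum>m. if 1 \<le> m then moment_kernel \<beta> \<theta> \<gamma> t n m * ennreal (f m) else 0)"

definition perron_triple ::
  "real \<Rightarrow> real \<Rightarrow> real \<Rightarrow> real \<Rightarrow> (nat \<Rightarrow> real) \<Rightarrow> (nat \<Rightarrow> real) \<Rightarrow> bool" where
  "perron_triple \<beta> \<theta> \<gamma> lam h \<pi> \<longleftrightarrow>
     (\<forall>n\<ge>1. 0 < h n)
   \<and> (\<exists>c C. 0 < c \<and> (\<forall>n\<ge>1. c \<le> h n \<and> h n \<le> C))
   \<and> (\<forall>t\<ge>0. \<forall>n\<ge>1. moment_sg \<beta> \<theta> \<gamma> t h n = ennreal (exp (lam * t) * h n))
   \<and> (\<forall>n\<ge>1. 0 \<le> \<pi> n)
   \<and> (\<lambda>n. if 1 \<le> n then \<pi> n else 0) sums 1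
   \<and> (\<forall>t\<ge>0. \<forall>m\<ge>1.
        (\<Sum>n. if 1 \<le> n then ennreal (\<pi> n) * moment_kernel \<beta> \<theta> \<gamma> t n m else 0)
          = ennreal (exp (lam * t) * \<pi> m))
   \<and> (\<lambda>n. if 1 \<le> n then \<pi> n * h n else 0) sums 1"

end

theory Submission
  imports Defs
begin


lemma mono_mild: "mono (mild_op \<beta> \<theta> \<gamma>)"
proof (rule monoI)
  fix K K' :: "real \<Rightarrow> nat \<Rightarrow> nat \<Rightarrow> ennreal"
  assume le: "K \<le> K'"
  have le': "K x y z \<le> K' x y z" for x y z using le by (simp add: le_fun_def)
  show "mild_op \<beta> \<theta> \<gamma> K \<le> mild_op \<beta> \<theta> \<gamma> K'"
    unfolding le_fun_def mild_op_def
    by (intro allI add_left_mono nn_integral_mono mult_right_mono mult_left_mono suminf_le)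
       (auto intro!: mult_left_mono le')
qed

definition kmeas :: "(real \<Rightarrow> nat \<Rightarrow> nat \<Rightarrow> ennreal) \<Rightarrow> bool" where
  "kmeas K \<longleftrightarrow> (\<forall>k m. (\<lambda>t. K t k m) \<in> borel_measurable borel)"

lemma mild_meas:
  assumes "kmeas K"
  shows "kmeas (mild_op \<beta> \<theta> \<gamma> K)"
  unfolding kmeas_def
proof (intro allI)
  fix n m
  have [measurable]: "(\<lambda>t. K t k m) \<in> borel_measurable borel" for k using assms by (simp add: kmeas_def)
  have ind: "indicator {0..t} s = (if 0 \<le> s \<and> s \<le> t then 1 else (0::ennreal))" for t s :: real
    by (simp add: indicator_def)
  have "(\<lambda>(t, s). (ennreal (exp (gen_entry \<beta> \<theta> \<gamma> n n * s)) *
          (\<Sum>k. if 1 \<le> k \<and> k \<noteq> n then ennreal (gen_entry \<beta> \<theta> \<gamma> n k) * K (t - s) k m else 0))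
          * indicator {0..t} s) \<in> borel_measurable (borel \<Otimes>\<^sub>M lborel)"
    unfolding ind by measurable
  then have "(\<lambda>t. \<integral>\<^sup>+ s. (ennreal (exp (gen_entry \<beta> \<theta> \<gamma> n n * s)) *
          (\<Sum>k. if 1 \<le> k \<and> k \<noteq> n then ennreal (gen_entry \<beta> \<theta> \<gamma> n k) * K (t - s) k m else 0))
          * indicator {0..t} s \<partial>lborel) \<in> borel_measurable borel"
    by (rule lborel.borel_measurable_nn_integral)
  then show "(\<lambda>t. mild_op \<beta> \<theta> \<gamma> K t n m) \<in> borel_measurable borel"
    unfolding mild_op_def by measurable
qed


lemma SUP_app3: "(SUP i. K i) t n m = (SUP i. K i t n m :: ennreal)"
  for K :: "nat \<Rightarrow> real \<Rightarrow> nat \<Rightarrow> nat \<Rightarrow> ennreal"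
  by (simp only: SUP_apply)

lemma mild_cont:
  fixes Kc :: "nat \<Rightarrow> real \<Rightarrow> nat \<Rightarrow> nat \<Rightarrow> ennreal"
  assumes inc: "incseq Kc" and meas: "\<And>i. kmeas (Kc i)"
  shows "mild_op \<beta> \<theta> \<gamma> (SUP i. Kc i) t n m = (SUP i. mild_op \<beta> \<theta> \<gamma> (Kc i) t n m)"
proof -
  define P where "P k = (1 \<le> k \<and> k \<noteq> n)" for k
  define L where "L k = ennreal (gen_entry \<beta> \<theta> \<gamma> n k)" for k
  define E where "E s = ennreal (exp (gen_entry \<beta> \<theta> \<gamma> n n * s))" for s
  define F where "F i s = (E s * (\<Sum>k. if P k then L k * Kc i (t - s) k m else 0)) * indicator {0..t} s" for i s
  have incK: "Kc i x k m \<le> Kc j x k m" if "i \<le> j" for i j x k m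
    using inc that by (simp add: incseq_def le_fun_def)
  have Finc: "incseq F"
    unfolding incseq_def le_fun_def F_def
    by (auto intro!: mult_right_mono mult_left_mono suminf_le incK)
  have Fmeas: "F i \<in> borel_measurable lborel" for i
  proof -
    have [measurable]: "(\<lambda>t. Kc i t k m) \<in> borel_measurable borel" for k using meas by (simp add: kmeas_def)
    show ?thesis unfolding F_def E_def L_def P_def by measurable
  qed
  have pt: "(E s * (\<Sum>k. if P k then L k * (SUP i. Kc i) (t - s) k m else 0)) * indicator {0..t} s = (SUP i. F i s)" for s
  proof -
    have a: "(if P k then L k * (SUP i. Kc i) (t-s) k m else 0) = (SUP i. if P k then L k * Kc i (t-s) k m else 0)" for k
      unfolding SUP_app3 by (simp add: SUP_mult_left_ennreal)
    have b: "(\<Sum>k. SUP i. if P k then L k * Kc i (t-s) k m else 0) = (SUP i. \<Sum>k. if P k then L k * Kc i (t-s) k m else 0)"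
      by (rule ennreal_suminf_SUP_eq) (auto simp: incseq_def intro!: mult_left_mono incK)
    show ?thesis unfolding a b F_def by (simp add: SUP_mult_left_ennreal SUP_mult_right_ennreal)
  qed
  have "mild_op \<beta> \<theta> \<gamma> (SUP i. Kc i) t n m
      = ennreal (if n = m then exp (gen_entry \<beta> \<theta> \<gamma> n n * t) else 0) + (\<integral>\<^sup>+ s. (SUP i. F i s) \<partial>lborel)"
  proof -
    have "mild_op \<beta> \<theta> \<gamma> (SUP i. Kc i) t n m = ennreal (if n = m then exp (gen_entry \<beta> \<theta> \<gamma> n n * t) else 0)
       + (\<integral>\<^sup>+ s. (E s * (\<Sum>k. if P k then L k * (SUP i. Kc i) (t - s) k m else 0)) * indicator {0..t} s \<partial>lborel)"
      unfolding mild_op_def P_def L_def E_def by simp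
    then show ?thesis unfolding pt .
  qed
  also have "\<dots> = ennreal (if n = m then exp (gen_entry \<beta> \<theta> \<gamma> n n * t) else 0) + (SUP i. integral\<^sup>N lborel (F i))"
    by (simp add: nn_integral_monotone_convergence_SUP[OF Finc Fmeas])
  also have "\<dots> = (SUP i. ennreal (if n = m then exp (gen_entry \<beta> \<theta> \<gamma> n n * t) else 0) + integral\<^sup>N lborel (F i))"
    by (simp add: ennreal_SUP_add_right)
  also have "\<dots> = (SUP i. mild_op \<beta> \<theta> \<gamma> (Kc i) t n m)"
    unfolding mild_op_def F_def P_def L_def E_def by simp
  finally show ?thesis .
qed

definition KS :: "real \<Rightarrow> real \<Rightarrow> real \<Rightarrow> nat \<Rightarrow> real \<Rightarrow> nat \<Rightarrow> nat \<Rightarrow> ennreal" where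
  "KS \<beta> \<theta> \<gamma> i = (mild_op \<beta> \<theta> \<gamma> ^^ i) bot"

lemma KS_meas: "kmeas (KS \<beta> \<theta> \<gamma> i)"
proof (induction i)
  case 0 then show ?case by (simp add: KS_def kmeas_def)
next
  case (Suc i) then show ?case using mild_meas[OF Suc.IH] by (simp add: KS_def)
qed

lemma KS_inc: "incseq (KS \<beta> \<theta> \<gamma>)"
proof (rule incseq_SucI)
  fix i show "KS \<beta> \<theta> \<gamma> i \<le> KS \<beta> \<theta> \<gamma> (Suc i)"
  proof (induction i)
    case 0 then show ?case by (simp add: KS_def le_fun_def)
  next
    case (Suc i) then show ?case using mono_mild[of \<beta> \<theta> \<gamma>] by (simp add: KS_def monoD)
  qed
qed

lemma KS_le: "KS \<beta> \<theta> \<gamma> i \<le> moment_kernel \<beta> \<theta> \<gamma>"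
proof (induction i)
  case 0 then show ?case by (simp add: KS_def le_fun_def)
next
  case (Suc i)
  have "mild_op \<beta> \<theta> \<gamma> (KS \<beta> \<theta> \<gamma> i) \<le> mild_op \<beta> \<theta> \<gamma> (moment_kernel \<beta> \<theta> \<gamma>)"
    using Suc mono_mild[of \<beta> \<theta> \<gamma>] by (simp add: monoD)
  also have "\<dots> = moment_kernel \<beta> \<theta> \<gamma>"
    unfolding moment_kernel_def using lfp_unfold[OF mono_mild] by simp
  finally show ?case by (simp add: KS_def)
qed

lemma kernel_eq_SUP: "moment_kernel \<beta> \<theta> \<gamma> = (SUP i. KS \<beta> \<theta> \<gamma> i)"
proof (rule antisym)
  show "moment_kernel \<beta> \<theta> \<gamma> \<le> (SUP i. KS \<beta> \<theta> \<gamma> i)"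
    unfolding moment_kernel_def
  proof (rule lfp_lowerbound)
    show "mild_op \<beta> \<theta> \<gamma> (SUP i. KS \<beta> \<theta> \<gamma> i) \<le> (SUP i. KS \<beta> \<theta> \<gamma> i)"
    proof (unfold le_fun_def, intro allI)
      fix t n m
      have "mild_op \<beta> \<theta> \<gamma> (SUP i. KS \<beta> \<theta> \<gamma> i) t n m = (SUP i. mild_op \<beta> \<theta> \<gamma> (KS \<beta> \<theta> \<gamma> i) t n m)"
        by (rule mild_cont[OF KS_inc KS_meas])
      also have "\<dots> = (SUP i. KS \<beta> \<theta> \<gamma> (Suc i) t n m)" by (simp add: KS_def)
      also have "\<dots> \<le> (SUP i. KS \<beta> \<theta> \<gamma> i t n m)"
        by (rule SUP_least) (rule SUP_upper, simp)
      finally show "mild_op \<beta> \<theta> \<gamma> (SUP i. KS \<beta> \<theta> \<gamma> i) t n m \<le> (SUP i. KS \<beta> \<theta> \<gamma> i) t n m"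
        by (simp only: SUP_app3)
    qed
  qed
  show "(SUP i. KS \<beta> \<theta> \<gamma> i) \<le> moment_kernel \<beta> \<theta> \<gamma>"
    by (rule SUP_least) (rule KS_le)
qed

lemma kernel_meas: "(\<lambda>t. moment_kernel \<beta> \<theta> \<gamma> t k m) \<in> borel_measurable borel"
proof -
  have [measurable]: "(\<lambda>t. KS \<beta> \<theta> \<gamma> i t k m) \<in> borel_measurable borel" for i
    using KS_meas by (simp add: kmeas_def)
  show ?thesis unfolding kernel_eq_SUP SUP_app3 by measurable
qed

lemma kernel_fix: "moment_kernel \<beta> \<theta> \<gamma> = mild_op \<beta> \<theta> \<gamma> (moment_kernel \<beta> \<theta> \<gamma>)"
  unfolding moment_kernel_def by (rule lfp_unfold[OF mono_mild])



lemma gfi_cong: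
  assumes n: "1 \<le> n" and eq: "\<And>k. 1 \<le> k \<Longrightarrow> k \<le> n + 1 \<Longrightarrow> f k = g k"
  shows "gfi_gen \<beta> \<theta> \<gamma> f n = gfi_gen \<beta> \<theta> \<gamma> g n"
proof -
  have "(\<Sum>j = 1..n - 1. \<gamma> * real n / (real j * (real j + 1)) * (f j + f (n - j) - f n))
      = (\<Sum>j = 1..n - 1. \<gamma> * real n / (real j * (real j + 1)) * (g j + g (n - j) - g n))"
    by (rule sum.cong) (auto simp: eq n)
  then show ?thesis unfolding gfi_gen_def using eq[of n] eq[of "n+1"] n by simp
qed

lemma wsum_add: "(\<Sum>j\<in>A. w j * ((f j + g j) + (f (n - j) + g (n - j)) - (f n + g n)))
    = (\<Sum>j\<in>A. w j * (f j + f (n - j) - f n)) + (\<Sum>j\<in>A. w j * (g j + g (n - j) - g n))"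
  for w f g :: "nat \<Rightarrow> real"
  by (simp add: sum.distrib[symmetric] algebra_simps)

lemma wsum_scale: "(\<Sum>j\<in>A. w j * (c * f j + c * f (n - j) - c * f n))
    = c * (\<Sum>j\<in>A. w j * (f j + f (n - j) - f n))"
  for w f :: "nat \<Rightarrow> real"
  by (simp add: sum_distrib_left algebra_simps)

lemma gfi_add: "gfi_gen \<beta> \<theta> \<gamma> (\<lambda>m. f m + g m) n = gfi_gen \<beta> \<theta> \<gamma> f n + gfi_gen \<beta> \<theta> \<gamma> g n"
proof -
  have "(\<Sum>j = 1..n - 1. \<gamma> * real n / (real j * (real j + 1)) * ((f j + g j) + (f (n - j) + g (n - j)) - (f n + g n)))
    = (\<Sum>j = 1..n - 1. \<gamma> * real n / (real j * (real j + 1)) * (f j + f (n - j) - f n))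
    + (\<Sum>j = 1..n - 1. \<gamma> * real n / (real j * (real j + 1)) * (g j + g (n - j) - g n))"
    by (rule wsum_add)
  then show ?thesis unfolding gfi_gen_def by (simp add: algebra_simps)
qed

lemma gfi_scale: "gfi_gen \<beta> \<theta> \<gamma> (\<lambda>m. c * f m) n = c * gfi_gen \<beta> \<theta> \<gamma> f n"
proof -
  have "(\<Sum>j = 1..n - 1. \<gamma> * real n / (real j * (real j + 1)) * (c * f j + c * f (n - j) - c * f n))
    = c * (\<Sum>j = 1..n - 1. \<gamma> * real n / (real j * (real j + 1)) * (f j + f (n - j) - f n))"
    by (rule wsum_scale)
  then show ?thesis unfolding gfi_gen_def by (simp add: algebra_simps)
qed

lemma gfi_zero: "gfi_gen \<beta> \<theta> \<gamma> (\<lambda>m. 0) n = 0"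
  unfolding gfi_gen_def by simp

lemma gfi_sum:
  assumes "finite A"
  shows "gfi_gen \<beta> \<theta> \<gamma> (\<lambda>m. \<Sum>k\<in>A. c k * F k m) n = (\<Sum>k\<in>A. c k * gfi_gen \<beta> \<theta> \<gamma> (F k) n)"
  using assms
proof (induction A rule: finite_induct)
  case empty then show ?case by (simp add: gfi_zero)
next
  case (insert x A)
  then show ?case
    by (simp add: gfi_add[where f="\<lambda>m. c x * F x m"] gfi_scale[where f="F x"])
qed

lemma gfi_expand:
  assumes n: "1 \<le> n"
  shows "gfi_gen \<beta> \<theta> \<gamma> h n = (\<Sum>k\<in>{1..n+1}. h k * gen_entry \<beta> \<theta> \<gamma> n k)"
proof -
  have "gfi_gen \<beta> \<theta> \<gamma> h n = gfi_gen \<beta> \<theta> \<gamma> (\<lambda>m. \<Sum>k\<in>{1..n+1}. h k * (if m = k then 1 else 0)) n"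
    by (rule gfi_cong[OF n]) (simp add: if_distrib cong: if_cong)
  also have "\<dots> = (\<Sum>k\<in>{1..n+1}. h k * gen_entry \<beta> \<theta> \<gamma> n k)"
    by (subst gfi_sum) (auto simp: gen_entry_def)
  finally show ?thesis .
qed

lemma gen_offdiag_nonneg:
  assumes "0 < \<beta>" "0 < \<gamma>" and "k \<noteq> n"
  shows "0 \<le> gen_entry \<beta> \<theta> \<gamma> n k"
  unfolding gen_entry_def gfi_gen_def using assms
  by (intro add_nonneg_nonneg sum_nonneg mult_nonneg_nonneg) auto

lemma gen_diag_neg:
  assumes "0 < \<beta>" "0 < \<theta>" "0 < \<gamma>" and "1 \<le> n"
  shows "gen_entry \<beta> \<theta> \<gamma> n n < 0"
proof -
  have s: "(\<Sum>j = 1..n - 1. \<gamma> * real n / (real j * (real j + 1)) *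
     ((if j = n then 1 else 0) + (if n - j = n then 1 else 0) - 1)) \<le> 0"
    using assms by (intro sum_nonpos) (auto simp: mult_nonneg_nonneg)
  have e: "gen_entry \<beta> \<theta> \<gamma> n n = - (\<beta> * real n) - \<theta> * real n + (\<Sum>j = 1..n - 1. \<gamma> * real n / (real j * (real j + 1)) *
     ((if j = n then 1 else 0) + (if n - j = n then 1 else 0) - 1))"
    unfolding gen_entry_def gfi_gen_def by simp
  have "0 < \<beta> * real n" "0 < \<theta> * real n" using assms by auto
  then show ?thesis using e s by linarith
qed

lemma gen_far_zero:
  assumes "n + 1 < k"
  shows "gen_entry \<beta> \<theta> \<gamma> n k = 0"
proof -
  have "(\<Sum>j = 1..n - 1. \<gamma> * real n / (real j * (real j + 1)) *
     ((if j = k then 1 else 0) + (if n - j = k then 1 else 0) - (if n = k then 1 else 0))) = 0"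
    using assms by (intro sum.neutral) auto
  then show ?thesis unfolding gen_entry_def gfi_gen_def using assms by simp
qed



lemma suminf_swap_ennreal: "(\<Sum>m. \<Sum>k. f k m) = (\<Sum>k. \<Sum>m. f k m :: ennreal)"
  for f :: "nat \<Rightarrow> nat \<Rightarrow> ennreal"
proof -
  have "(\<Sum>k. \<Sum>m. f k m) = (\<integral>\<^sup>+ k. (\<Sum>m. f k m) \<partial>count_space UNIV)"
    by (simp add: nn_integral_count_space_nat)
  also have "\<dots> = (\<Sum>m. \<integral>\<^sup>+ k. f k m \<partial>count_space UNIV)"
    by (rule nn_integral_suminf) simp
  also have "\<dots> = (\<Sum>m. \<Sum>k. f k m)"
    by (simp add: nn_integral_count_space_nat)
  finally show ?thesis ..
qed

lemma exp_integral:
  fixes d :: real assumes d: "d < 0"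
  shows "(\<integral>\<^sup>+ s. ennreal (exp (d * s)) * indicator {0..1} s \<partial>lborel) = ennreal ((exp d - 1) / d)"
proof -
  have "((\<lambda>s. exp (d * s)) has_integral ((\<lambda>s. exp (d * s) / d) 1 - (\<lambda>s. exp (d * s) / d) 0)) {0..1}"
  proof (rule fundamental_theorem_of_calculus)
    show "(0::real) \<le> 1" by simp
    fix x :: real assume "x \<in> {0..1}"
    have "((\<lambda>s. exp (d * s) / d) has_real_derivative (exp (d * x) * d) / d) (at x within {0..1})"
      using d by (intro derivative_eq_intros) auto
    then show "((\<lambda>s. exp (d * s) / d) has_vector_derivative exp (d * x)) (at x within {0..1})"
      using d by (simp add: has_real_derivative_iff_has_vector_derivative)
  qed
  then have "((\<lambda>s. exp (d * s)) has_integral ((exp d - 1) / d)) {0..1}"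
    by (simp add: diff_divide_distrib)
  then show ?thesis by (intro nn_integral_has_integral_lebesgue') auto
qed


lemma harmonic:
  fixes \<beta> \<theta> \<gamma> :: real and h \<pi> :: "nat \<Rightarrow> real"
  assumes pos: "0<\<beta>" "0<\<theta>" "0<\<gamma>" and PT: "perron_triple \<beta> \<theta> \<gamma> 0 h \<pi>" and n: "1 \<le> n"
  shows "gfi_gen \<beta> \<theta> \<gamma> h n = 0"
proof -
  have hpos: "\<And>k. 1 \<le> k \<Longrightarrow> 0 < h k" using PT by (simp add: perron_triple_def)
  have eig: "\<And>t k. 0 \<le> t \<Longrightarrow> 1 \<le> k \<Longrightarrow> moment_sg \<beta> \<theta> \<gamma> t h k = ennreal (h k)"
    using PT by (simp add: perron_triple_def)
  define K where "K = moment_kernel \<beta> \<theta> \<gamma>"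
  define L where "L k = gen_entry \<beta> \<theta> \<gamma> n k" for k
  define d where "d = gen_entry \<beta> \<theta> \<gamma> n n"
  define P where "P k = (1 \<le> k \<and> k \<noteq> n)" for k
  define E where "E s = ennreal (exp (d * s))" for s
  define S where "S = (\<Sum>k. if P k then ennreal (L k) * ennreal (h k) else 0)"
  define N where "N = {k. 1 \<le> k \<and> k \<le> n+1 \<and> k \<noteq> n}"
  define Sr where "Sr = (\<Sum>k\<in>N. L k * h k)"
  define I where "I = (exp d - 1) / d"
  have dneg: "d < 0" unfolding d_def using gen_diag_neg[OF pos n] .
  have Lnn: "0 \<le> L k" if "k \<noteq> n" for k unfolding L_def using gen_offdiag_nonneg[OF pos(1,3) that] .
  have Ipos: "0 < I" unfolding I_def using dneg by (simp add: divide_neg_neg)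
  have [measurable]: "(\<lambda>t. K t k m) \<in> borel_measurable borel" for k m by (simp add: K_def kernel_meas)
  have Kfix: "K t n m = ennreal (if n = m then exp (d * t) else 0)
      + (\<integral>\<^sup>+ s. (E s * (\<Sum>k. if P k then ennreal (L k) * K (t - s) k m else 0)) * indicator {0..t} s \<partial>lborel)" for t m
  proof -
    have "K t n m = mild_op \<beta> \<theta> \<gamma> K t n m" unfolding K_def by (subst kernel_fix) simp
    then show ?thesis unfolding mild_op_def P_def L_def E_def d_def by simp
  qed
  define G where "G m s = (E s * (\<Sum>k. if P k then ennreal (L k) * K (1 - s) k m else 0)) * indicator {0..1} s" for m s
  have Gmeas[measurable]: "G m \<in> borel_measurable lborel" for m
    unfolding G_def E_def P_def L_def by measurable
  have "ennreal (h n) = moment_sg \<beta> \<theta> \<gamma> 1 h n" using eig[of 1 n] n by simp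
  also have "\<dots> = (\<Sum>m. (if 1 \<le> m then ennreal (if n = m then exp d else 0) * ennreal (h m) else 0)
                     + (if 1 \<le> m then integral\<^sup>N lborel (G m) * ennreal (h m) else 0))"
    unfolding moment_sg_def K_def[symmetric] G_def by (intro arg_cong[where f=suminf] ext) (simp add: Kfix distrib_right)
  also have "\<dots> = (\<Sum>m. if 1 \<le> m then ennreal (if n = m then exp d else 0) * ennreal (h m) else 0)
                 + (\<Sum>m. if 1 \<le> m then integral\<^sup>N lborel (G m) * ennreal (h m) else 0)"
    by (rule suminf_add[symmetric]) auto
  finally have chain: "ennreal (h n) = (\<Sum>m. if 1 \<le> m then ennreal (if n = m then exp d else 0) * ennreal (h m) else 0)
                 + (\<Sum>m. if 1 \<le> m then integral\<^sup>N lborel (G m) * ennreal (h m) else 0)" .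
  have hA: "(\<Sum>m. if 1 \<le> m then ennreal (if n = m then exp d else 0) * ennreal (h m) else 0) = ennreal (exp d * h n)"
    using n hpos[OF n] by (subst suminf_finite[of "{n}"]) (auto simp: ennreal_mult)
  have hB: "(\<Sum>m. if 1 \<le> m then integral\<^sup>N lborel (G m) * ennreal (h m) else 0) = ennreal I * S"
  proof -
    have "(\<Sum>m. if 1 \<le> m then integral\<^sup>N lborel (G m) * ennreal (h m) else 0)
        = (\<Sum>m. \<integral>\<^sup>+ s. (if 1 \<le> m then G m s * ennreal (h m) else 0) \<partial>lborel)"
      by (intro arg_cong[where f=suminf] ext) (simp add: nn_integral_multc)
    also have "\<dots> = (\<integral>\<^sup>+ s. (\<Sum>m. if 1 \<le> m then G m s * ennreal (h m) else 0) \<partial>lborel)"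
      by (rule nn_integral_suminf[symmetric]) simp
    also have "\<dots> = (\<integral>\<^sup>+ s. E s * indicator {0..1} s * S \<partial>lborel)"
    proof (rule nn_integral_cong)
      fix s :: real
      show "(\<Sum>m. if 1 \<le> m then G m s * ennreal (h m) else 0) = E s * indicator {0..1} s * S"
      proof (cases "s \<in> {0..1}")
        case False
        then have ind0: "indicator {0..1} s = (0::ennreal)" by (simp add: indicator_def)
        have "(\<lambda>m. if 1 \<le> m then G m s * ennreal (h m) else 0) = (\<lambda>m. 0)"
          unfolding G_def ind0 by (rule ext) simp
        then show ?thesis using ind0 by simp
      next
        case True
        then have s1: "0 \<le> 1 - s" by simp
        define Q where "Q k m = (if P k then ennreal (L k) * K (1 - s) k m else 0)" for k m
        define H where "H m = (if 1 \<le> m then ennreal (h m) else 0)" for m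
        have ind1: "indicator {0..1} s = (1::ennreal)" using True by (simp add: indicator_def)
        have e1: "(\<lambda>m. if 1 \<le> m then G m s * ennreal (h m) else 0) = (\<lambda>m. E s * (\<Sum>k. Q k m * H m))"
        proof (rule ext)
          fix m
          have "(\<Sum>k. Q k m * H m) = (\<Sum>k. Q k m) * H m" by simp
          then show "(if 1 \<le> m then G m s * ennreal (h m) else 0) = E s * (\<Sum>k. Q k m * H m)"
            unfolding G_def ind1 by (simp add: Q_def H_def mult.assoc)
        qed
        have e3: "(\<Sum>m. Q k m * H m) = (if P k then ennreal (L k) * ennreal (h k) else 0)" for k
        proof (cases "P k")
          case False
          then have "(\<lambda>m. Q k m * H m) = (\<lambda>m. 0)" by (simp add: Q_def)
          then show ?thesis using False by simp
        next
          case True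
          then have k1: "1 \<le> k" by (simp add: P_def)
          have "(\<lambda>m. Q k m * H m) = (\<lambda>m. ennreal (L k) * (if 1 \<le> m then K (1 - s) k m * ennreal (h m) else 0))"
            using True by (intro ext) (simp add: Q_def H_def mult.assoc)
          then have "(\<Sum>m. Q k m * H m) = ennreal (L k) * moment_sg \<beta> \<theta> \<gamma> (1 - s) h k"
            unfolding moment_sg_def K_def by simp
          then show ?thesis using eig[OF s1 k1] True by simp
        qed
        have "(\<Sum>m. if 1 \<le> m then G m s * ennreal (h m) else 0) = (\<Sum>m. E s * (\<Sum>k. Q k m * H m))"
          unfolding e1 ..
        also have "\<dots> = E s * (\<Sum>m. \<Sum>k. Q k m * H m)" by simp
        also have "\<dots> = E s * (\<Sum>k. \<Sum>m. Q k m * H m)" by (subst suminf_swap_ennreal) (rule refl)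
        also have "\<dots> = E s * S" unfolding e3 S_def ..
        finally show ?thesis using ind1 by simp
      qed
    qed
    also have "\<dots> = (\<integral>\<^sup>+ s. E s * indicator {0..1} s \<partial>lborel) * S"
      by (rule nn_integral_multc) (simp add: E_def)
    also have "\<dots> = ennreal I * S"
    proof -
      have "(\<integral>\<^sup>+ s. E s * indicator {0..1} s \<partial>lborel) = ennreal I"
        unfolding E_def I_def by (rule exp_integral[OF dneg])
      then show ?thesis by simp
    qed
    finally show ?thesis .
  qed
  have hS: "S = ennreal Sr"
  proof -
    have "S = (\<Sum>k\<in>N. if P k then ennreal (L k) * ennreal (h k) else 0)"
      unfolding S_def
    proof (rule suminf_finite)
      show "finite N" by (simp add: N_def)
      fix k assume "k \<notin> N"
      then have "\<not> P k \<or> n + 1 < k" by (auto simp: N_def P_def)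
      then show "(if P k then ennreal (L k) * ennreal (h k) else 0) = 0"
        using gen_far_zero by (auto simp: L_def)
    qed
    also have "\<dots> = (\<Sum>k\<in>N. ennreal (L k * h k))"
      by (rule sum.cong) (auto simp: N_def P_def ennreal_mult Lnn hpos less_imp_le)
    also have "\<dots> = ennreal Sr"
      unfolding Sr_def by (rule sum_ennreal) (auto simp: N_def Lnn hpos less_imp_le)
    finally show ?thesis .
  qed
  have eq: "ennreal (h n) = ennreal (exp d * h n) + ennreal I * ennreal Sr"
    using chain unfolding hA hB hS .
  have Sr0: "0 \<le> Sr" unfolding Sr_def by (rule sum_nonneg) (auto simp: N_def Lnn hpos less_imp_le)
  have "ennreal (h n) = ennreal (exp d * h n + I * Sr)"
    using eq Ipos Sr0 hpos[OF n] by (simp add: ennreal_mult ennreal_plus)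
  then have hr: "h n = exp d * h n + I * Sr"
    using Ipos Sr0 hpos[OF n] by (subst (asm) ennreal_inj) auto
  have Srv: "Sr = - d * h n"
  proof -
    have a: "I * Sr = (1 - exp d) * h n" using hr by (simp add: algebra_simps)
    have b: "(exp d - 1) * Sr = d * (I * Sr)" unfolding I_def using dneg by simp
    have "(exp d - 1) * Sr = (exp d - 1) * (- d * h n)" unfolding b a by (simp add: algebra_simps)
    moreover have "exp d - 1 \<noteq> 0" using dneg by simp
    ultimately show ?thesis by (metis mult_left_cancel)
  qed
  have "gfi_gen \<beta> \<theta> \<gamma> h n = (\<Sum>k\<in>{1..n+1}. h k * L k)" unfolding L_def by (rule gfi_expand[OF n])
  also have "\<dots> = (\<Sum>k\<in>insert n N. h k * L k)"
  proof -
    have "{1..n+1} = insert n N" using n by (auto simp: N_def)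
    then show ?thesis by simp
  qed
  also have "\<dots> = h n * L n + Sr"
    by (subst sum.insert) (auto simp: N_def Sr_def mult.commute)
  finally show ?thesis using Srv by (simp add: L_def d_def)
qed



definition aw :: "nat \<Rightarrow> real" where "aw j = 1 / (real j * (real j + 1))"

lemma frac_h1: fixes p q :: real assumes "p > 0" "q = p + 1" shows "(p-1)/p + 1/(p*q) = p/q"
proof -
  have "q > 0" using assms by simp
  then show ?thesis using assms(1) by (simp add: field_simps) (simp add: assms(2) algebra_simps)
qed
lemma frac_h2: fixes p q :: real assumes "p > 0" "q = p + 1" shows "1/q = 1/p - 1/(p*q)"
proof -
  have "q > 0" using assms by simp
  then show ?thesis using assms(1) by (simp add: field_simps) (simp add: assms(2) algebra_simps)
qed

lemma sum_aw: "(\<Sum>j=1..n. aw j) = real n / (real n + 1)"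
proof (induction n)
  case 0 then show ?case by simp
next
  case (Suc n)
  have "(\<Sum>j=1..Suc n. aw j) = real n / (real n + 1) + aw (Suc n)"
    using Suc by (simp add: sum.atLeast1_atMost_eq)
  also have "\<dots> = real (Suc n) / (real (Suc n) + 1)"
    using frac_h1[of "real n + 1" "real n + 2"] by (simp add: aw_def add.commute)
  finally show ?case .
qed

lemma aw_nonneg: "0 \<le> aw j" by (simp add: aw_def)
lemma aw_anti: "1 \<le> j \<Longrightarrow> aw (Suc j) \<le> aw j"
  unfolding aw_def by (auto intro!: divide_left_mono mult_mono mult_pos_pos)

definition Phi :: "real \<Rightarrow> real \<Rightarrow> real \<Rightarrow> (nat \<Rightarrow> real) \<Rightarrow> nat \<Rightarrow> real" where
  "Phi \<beta> \<theta> \<gamma> c n = (if n = 0 then c 0 else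
     (\<beta> * c (n+1) + \<gamma> * (\<Sum>j=1..n. aw j * c (n-j)) + \<gamma> * c n / (real n + 1)) / (\<theta> + \<beta> + \<gamma>))"

lemma coupling:
  fixes c :: "nat \<Rightarrow> real"
  assumes anti: "\<And>i. c (Suc i) \<le> c i" and n: "1 \<le> n"
  shows "(\<Sum>j=1..n+1. aw j * c (n+1-j)) + c (n+1) / (real n + 2)
       \<le> (\<Sum>j=1..n. aw j * c (n-j)) + c n / (real n + 1)"
proof -
  have am: "c j \<le> c i" if "i \<le> j" for i j
    using that by (induction j) (auto intro: order_trans[OF anti] simp: le_Suc_eq)
  have L: "(\<Sum>j=1..n+1. aw j * c (n+1-j)) = aw 1 * c n + (\<Sum>j=1..n. aw (j+1) * c (n-j))"
  proof -
    have "(\<Sum>j=1..n+1. aw j * c (n+1-j)) = aw 1 * c n + (\<Sum>j=Suc 1..Suc n. aw j * c (n+1-j))"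
      by (simp add: sum.atLeast_Suc_atMost)
    also have "(\<Sum>j=Suc 1..Suc n. aw j * c (n+1-j)) = (\<Sum>j=1..n. aw (j+1) * c (n-j))"
      by (simp only: sum.shift_bounds_cl_Suc_ivl) (simp add: Suc_diff_le)
    finally show ?thesis .
  qed
  have tel: "(\<Sum>j=1..n. aw j - aw (j+1)) = aw 1 - aw (n+1)"
    by (induction n) (auto simp: sum.atLeast1_atMost_eq)
  have R: "(\<Sum>j=1..n. aw j * c (n-j)) \<ge> (\<Sum>j=1..n. aw (j+1) * c (n-j)) + (aw 1 - aw (n+1)) * c n"
  proof -
    have "(\<Sum>j=1..n. aw j * c (n-j)) = (\<Sum>j=1..n. aw (j+1) * c (n-j)) + (\<Sum>j=1..n. (aw j - aw (j+1)) * c (n-j))"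
      by (simp add: sum.distrib[symmetric] algebra_simps)
    moreover have "(\<Sum>j=1..n. (aw j - aw (j+1)) * c (n-j)) \<ge> (\<Sum>j=1..n. (aw j - aw (j+1)) * c n)"
      by (rule sum_mono) (auto intro!: mult_left_mono am simp: aw_anti[simplified])
    moreover have "(\<Sum>j=1..n. (aw j - aw (j+1)) * c n) = (aw 1 - aw (n+1)) * c n"
      by (subst sum_distrib_right[symmetric]) (simp only: tel)
    ultimately show ?thesis by linarith
  qed
  have c1: "c (n+1) / (real n + 2) \<le> c n / (real n + 2)"
    using anti[of n] by (simp add: divide_right_mono)
  have coef: "aw 1 + 1 / (real n + 2) = aw 1 - aw (n+1) + 1 / (real n + 1)"
    using frac_h2[of "real n + 1" "real n + 2"] by (simp add: aw_def add.commute)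
  have "aw 1 * c n + c n / (real n + 2) = (aw 1 - aw (n+1)) * c n + c n / (real n + 1)"
  proof -
    have "aw 1 * c n + c n / (real n + 2) = (aw 1 + 1/(real n+2)) * c n" by (simp add: algebra_simps)
    also have "\<dots> = (aw 1 - aw (n+1) + 1/(real n+1)) * c n" using coef by simp
    also have "\<dots> = (aw 1 - aw (n+1)) * c n + c n/(real n+1)" by (simp add: algebra_simps)
    finally show ?thesis .
  qed
  then show ?thesis using L R c1 by linarith
qed


lemma Phi_anti:
  fixes c :: "nat \<Rightarrow> real"
  assumes pos: "0<\<beta>" "0<\<theta>" "0<\<gamma>" and anti: "\<And>i. c (Suc i) \<le> c i" and c0: "0 \<le> c 0"
  shows "Phi \<beta> \<theta> \<gamma> c (Suc i) \<le> Phi \<beta> \<theta> \<gamma> c i"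
proof -
  have am: "c j \<le> c i" if "i \<le> j" for i j
    using that by (induction j) (auto intro: order_trans[OF anti] simp: le_Suc_eq)
  have den: "0 < \<theta> + \<beta> + \<gamma>" using pos by simp
  show ?thesis
  proof (cases i)
    case 0
    have a1: "aw 1 = 1/2" by (simp add: aw_def)
    have "\<beta> * c 2 \<le> \<beta> * c 0" using am[of 0 2] pos by simp
    moreover have "\<gamma> * c 1 / 2 \<le> \<gamma> * c 0 / 2" using am[of 0 1] pos by simp
    ultimately have "\<beta> * c 2 + \<gamma> * (aw 1 * c 0) + \<gamma> * c 1 / 2 \<le> \<beta> * c 0 + \<gamma> * (c 0 / 2) + \<gamma> * c 0 / 2"
      unfolding a1 by simp
    also have "\<dots> \<le> (\<theta> + \<beta> + \<gamma>) * c 0" using pos c0 by (simp add: algebra_simps)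
    finally have "(\<beta> * c 2 + \<gamma> * (aw 1 * c 0) + \<gamma> * c 1 / 2) / (\<theta> + \<beta> + \<gamma>) \<le> c 0"
      using den by (subst pos_divide_le_eq) (auto simp: mult.commute)
    then show ?thesis using 0 by (simp add: Phi_def numeral_2_eq_2)
  next
    case (Suc n)
    have n: "1 \<le> i" using Suc by simp
    have cp: "(\<Sum>j=1..i+1. aw j * c (i+1-j)) + c (i+1) / (real i + 2)
       \<le> (\<Sum>j=1..i. aw j * c (i-j)) + c i / (real i + 1)"
      using coupling[of c i] anti n by blast
    have "\<beta> * c (Suc i + 1) + \<gamma> * (\<Sum>j=1..Suc i. aw j * c (Suc i - j)) + \<gamma> * c (Suc i) / (real (Suc i) + 1)
        \<le> \<beta> * c (i + 1) + \<gamma> * (\<Sum>j=1..i. aw j * c (i - j)) + \<gamma> * c i / (real i + 1)"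
    proof -
      have "\<beta> * c (Suc i + 1) \<le> \<beta> * c (i + 1)" using anti[of "i+1"] pos by simp
      moreover have "\<gamma> * ((\<Sum>j=1..Suc i. aw j * c (Suc i - j)) + c (Suc i) / (real (Suc i) + 1))
          \<le> \<gamma> * ((\<Sum>j=1..i. aw j * c (i-j)) + c i / (real i + 1))"
        using cp pos by (intro mult_left_mono) (auto simp: add_ac)
      ultimately show ?thesis by (simp add: algebra_simps)
    qed
    then show ?thesis using n den by (auto simp: Phi_def divide_right_mono)
  qed
qed

lemma Phi_contr:
  fixes c D :: "nat \<Rightarrow> real"
  assumes pos: "0<\<beta>" "0<\<theta>" "0<\<gamma>" and fx: "\<And>n. 1 \<le> n \<Longrightarrow> Phi \<beta> \<theta> \<gamma> D n = D n"
    and cl: "\<And>m. \<bar>D m - c m\<bar> \<le> e" and z: "D 0 = c 0"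
  shows "\<bar>D m - Phi \<beta> \<theta> \<gamma> c m\<bar> \<le> (\<beta> + \<gamma>) / (\<theta> + \<beta> + \<gamma>) * e"
proof (cases "m = 0")
  case True
  have "0 \<le> e" using cl[of 0] by simp
  then show ?thesis using True z pos by (simp add: Phi_def)
next
  case False
  have den: "0 < \<theta> + \<beta> + \<gamma>" using pos by simp
  have e0: "0 \<le> e" using cl[of 0] by simp
  have "D m - Phi \<beta> \<theta> \<gamma> c m = Phi \<beta> \<theta> \<gamma> D m - Phi \<beta> \<theta> \<gamma> c m" using fx[of m] False by simp
  also have "\<dots> = (\<beta> * (D (m+1) - c (m+1)) + \<gamma> * ((\<Sum>j=1..m. aw j * D (m-j)) - (\<Sum>j=1..m. aw j * c (m-j)))
        + \<gamma> * (D m - c m) / (real m + 1)) / (\<theta> + \<beta> + \<gamma>)"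
  proof -
    have "Phi \<beta> \<theta> \<gamma> D m - Phi \<beta> \<theta> \<gamma> c m =
      ((\<beta> * D (m+1) + \<gamma> * (\<Sum>j=1..m. aw j * D (m-j)) + \<gamma> * D m / (real m + 1))
      - (\<beta> * c (m+1) + \<gamma> * (\<Sum>j=1..m. aw j * c (m-j)) + \<gamma> * c m / (real m + 1))) / (\<theta> + \<beta> + \<gamma>)"
      using False unfolding Phi_def by (simp add: diff_divide_distrib)
    moreover have "(\<beta> * D (m+1) + \<gamma> * (\<Sum>j=1..m. aw j * D (m-j)) + \<gamma> * D m / (real m + 1))
      - (\<beta> * c (m+1) + \<gamma> * (\<Sum>j=1..m. aw j * c (m-j)) + \<gamma> * c m / (real m + 1))
      = \<beta> * (D (m+1) - c (m+1)) + \<gamma> * ((\<Sum>j=1..m. aw j * D (m-j)) - (\<Sum>j=1..m. aw j * c (m-j)))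
        + \<gamma> * (D m - c m) / (real m + 1)"
      by (simp add: algebra_simps diff_divide_distrib)
    ultimately show ?thesis by simp
  qed
  also have "(\<Sum>j=1..m. aw j * D (m-j)) - (\<Sum>j=1..m. aw j * c (m-j)) = (\<Sum>j=1..m. aw j * (D (m-j) - c (m-j)))"
    by (simp add: sum_subtractf[symmetric] algebra_simps)
  finally have eq: "D m - Phi \<beta> \<theta> \<gamma> c m = (\<beta> * (D (m+1) - c (m+1)) + \<gamma> * (\<Sum>j=1..m. aw j * (D (m-j) - c (m-j)))
        + \<gamma> * (D m - c m) / (real m + 1)) / (\<theta> + \<beta> + \<gamma>)" .
  have "\<bar>\<beta> * (D (m+1) - c (m+1)) + \<gamma> * (\<Sum>j=1..m. aw j * (D (m-j) - c (m-j)))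
        + \<gamma> * (D m - c m) / (real m + 1)\<bar>
      \<le> \<beta> * e + \<gamma> * (\<Sum>j=1..m. aw j * e) + \<gamma> * e / (real m + 1)"
  proof -
    have t1: "\<bar>\<beta> * (D (m+1) - c (m+1))\<bar> \<le> \<beta> * e" using cl pos by (simp add: abs_mult)
    have "\<bar>\<Sum>j=1..m. aw j * (D (m-j) - c (m-j))\<bar> \<le> (\<Sum>j=1..m. \<bar>aw j * (D (m-j) - c (m-j))\<bar>)"
      by (rule sum_abs)
    also have "\<dots> \<le> (\<Sum>j=1..m. aw j * e)"
      by (rule sum_mono) (simp add: abs_mult aw_nonneg cl mult_left_mono)
    finally have t2: "\<bar>\<gamma> * (\<Sum>j=1..m. aw j * (D (m-j) - c (m-j)))\<bar> \<le> \<gamma> * (\<Sum>j=1..m. aw j * e)"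
      using pos by (simp add: abs_mult)
    have t3: "\<bar>\<gamma> * (D m - c m) / (real m + 1)\<bar> \<le> \<gamma> * e / (real m + 1)"
      using cl[of m] pos by (simp add: abs_mult divide_right_mono mult_left_mono)
    show ?thesis using t1 t2 t3 by linarith
  qed
  also have "\<dots> = (\<beta> + \<gamma>) * e"
  proof -
    have "(\<Sum>j=1..m. aw j * e) = real m / (real m + 1) * e" using sum_aw[of m] by (simp add: sum_distrib_right[symmetric])
    moreover have "real m / (real m + 1) + 1 / (real m + 1) = 1"
      by (simp add: add_divide_distrib[symmetric])
    ultimately show ?thesis
      by (simp add: algebra_simps) (metis (no_types, lifting) add_divide_distrib distrib_left mult.commute mult.right_neutral times_divide_eq_right)
  qed
  finally show ?thesis using eq den by (simp add: abs_div divide_right_mono)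
qed


lemma partB:
  fixes \<beta> \<theta> \<gamma> C :: real and h :: "nat \<Rightarrow> real"
  assumes pos: "0<\<beta>" "0<\<theta>" "0<\<gamma>" and harm: "\<And>n. 1 \<le> n \<Longrightarrow> gfi_gen \<beta> \<theta> \<gamma> h n = 0"
    and bnd: "\<And>n. 1 \<le> n \<Longrightarrow> \<bar>h n\<bar> \<le> C" and h1: "0 \<le> h 1"
    and mn: "1 \<le> m" "1 \<le> n"
  shows "h (m+n) \<le> h m + h n"
proof -
  define hh where "hh k = (if k = 0 then 0 else h k)" for k
  define D where "D k = hh (Suc k) - hh k" for k
  define T where "T n = (\<Sum>j=1..n. aw j * (hh j + hh (n-j) - hh n))" for n
  define R where "R n = \<beta> * (hh (n+1) - hh n) - \<theta> * hh n + \<gamma> * T n" for n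
  have R0: "R n = 0" if n: "1 \<le> n" for n
  proof -
    have "T n = (\<Sum>j=1..n-1. aw j * (h j + h (n-j) - h n))"
    proof -
      have nn: "n = Suc (n-1)" using n by simp
      have st: "{1..n} - {n} = {1..n-1}" using n by auto
      have "T n = (\<Sum>j=1..n-1. aw j * (hh j + hh (n-j) - hh n)) + aw n * (hh n + hh 0 - hh n)"
        unfolding T_def using n by (subst sum.remove[of _ n]) (auto simp: st simp del: One_nat_def)
      also have "\<dots> = (\<Sum>j=1..n-1. aw j * (hh j + hh (n-j) - hh n))" by (simp add: hh_def)
      also have "\<dots> = (\<Sum>j=1..n-1. aw j * (h j + h (n-j) - h n))"
        by (rule sum.cong) (auto simp: hh_def)
      finally show ?thesis .
    qed
    moreover have "gfi_gen \<beta> \<theta> \<gamma> h n = real n * (\<beta> * (h (n+1) - h n) - \<theta> * h n + \<gamma> * (\<Sum>j=1..n-1. aw j * (h j + h (n-j) - h n)))"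
      unfolding gfi_gen_def by (simp add: algebra_simps sum_distrib_left aw_def)
    ultimately have "gfi_gen \<beta> \<theta> \<gamma> h n = real n * R n" using n by (simp add: R_def hh_def)
    then show ?thesis using harm[OF n] n by simp
  qed
  have Tdiff: "T (n+1) - T n = (\<Sum>j=1..n. aw j * (D (n-j) - D n))" for n
  proof -
    have "T (n+1) = (\<Sum>j=1..n. aw j * (hh j + hh (n+1-j) - hh (n+1))) + aw (n+1) * (hh (n+1) + hh 0 - hh (n+1))"
      unfolding T_def by simp
    also have "\<dots> = (\<Sum>j=1..n. aw j * (hh j + hh (n+1-j) - hh (n+1)))" by (simp add: hh_def)
    finally have "T (n+1) - T n = (\<Sum>j=1..n. aw j * (hh j + hh (n+1-j) - hh (n+1)) - aw j * (hh j + hh (n-j) - hh n))"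
      unfolding T_def by (simp add: sum_subtractf)
    also have "\<dots> = (\<Sum>j=1..n. aw j * (D (n-j) - D n))"
    proof (rule sum.cong)
      fix j assume "j \<in> {1..n}"
      then have "n + 1 - j = Suc (n - j)" by auto
      then show "aw j * (hh j + hh (n+1-j) - hh (n+1)) - aw j * (hh j + hh (n-j) - hh n) = aw j * (D (n-j) - D n)"
        by (simp add: D_def algebra_simps)
    qed simp
    finally show ?thesis .
  qed
  have fixD: "Phi \<beta> \<theta> \<gamma> D n = D n" if n: "1 \<le> n" for n
  proof -
    have "R (n+1) - R n = 0" using R0[of n] R0[of "n+1"] n by simp
    then have E: "\<beta> * (D (n+1) - D n) - \<theta> * D n + \<gamma> * (\<Sum>j=1..n. aw j * (D (n-j) - D n)) = 0"
      unfolding R_def using Tdiff[of n] by (simp add: D_def algebra_simps)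
    have "(\<Sum>j=1..n. aw j * (D (n-j) - D n)) = (\<Sum>j=1..n. aw j * D (n-j)) - (real n / (real n + 1)) * D n"
    proof -
      have s1: "(\<Sum>j=1..n. aw j * (D (n-j) - D n)) = (\<Sum>j=1..n. aw j * D (n-j)) - (\<Sum>j=1..n. aw j * D n)"
        by (simp add: sum_subtractf[symmetric] algebra_simps)
      have s2: "(\<Sum>j=1..n. aw j * D n) = real n / (real n + 1) * D n"
        using sum_aw[of n] by (simp add: sum_distrib_right[symmetric])
      show ?thesis using s1 s2 by simp
    qed
    also have "real n / (real n + 1) = 1 - 1 / (real n + 1)"
      by (simp add: field_simps)
    finally have Xe: "(\<Sum>j=1..n. aw j * (D (n-j) - D n)) = (\<Sum>j=1..n. aw j * D (n-j)) - (1 - 1 / (real n + 1)) * D n" .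
    have "\<gamma> * (\<Sum>j=1..n. aw j * (D (n-j) - D n)) = \<gamma> * (\<Sum>j=1..n. aw j * D (n-j)) - \<gamma> * D n + \<gamma> * D n / (real n + 1)"
      unfolding Xe by (simp add: algebra_simps)
    then have "\<beta> * D (n+1) + \<gamma> * (\<Sum>j=1..n. aw j * D (n-j)) + \<gamma> * D n / (real n + 1) = (\<theta> + \<beta> + \<gamma>) * D n"
      using E by (simp only: distrib_right right_diff_distrib)
    then show ?thesis using n pos by (simp add: Phi_def)
  qed
  define \<kappa> where "\<kappa> = (\<beta> + \<gamma>) / (\<theta> + \<beta> + \<gamma>)"
  have \<kappa>: "0 \<le> \<kappa>" "\<kappa> < 1" using pos by (auto simp: \<kappa>_def)
  define it where "it k = (Phi \<beta> \<theta> \<gamma> ^^ k) (\<lambda>_. h 1)" for k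
  have it0: "it k 0 = h 1" for k
    by (induction k) (auto simp: it_def Phi_def)
  have itanti: "it k (Suc i) \<le> it k i" for k i
  proof (induction k arbitrary: i)
    case 0 then show ?case by (simp add: it_def)
  next
    case (Suc k)
    have "Phi \<beta> \<theta> \<gamma> (it k) (Suc i) \<le> Phi \<beta> \<theta> \<gamma> (it k) i"
      by (rule Phi_anti[of \<beta> \<theta> \<gamma> "it k", OF pos Suc.IH]) (use h1 in \<open>simp add: it0\<close>)
    then show ?case by (simp add: it_def)
  qed
  have D0: "D 0 = h 1" by (simp add: D_def hh_def)
  define B where "B = 3 * C"
  have Dbnd: "\<bar>D m - h 1\<bar> \<le> B" for m
  proof -
    have C1: "\<bar>h 1\<bar> \<le> C" using bnd[of 1] by simp
    show ?thesis
    proof (cases m)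
      case 0 then show ?thesis using C1 by (simp add: D0 B_def)
    next
      case (Suc k)
      have "\<bar>h (Suc (Suc k))\<bar> \<le> C" "\<bar>h (Suc k)\<bar> \<le> C" using bnd by auto
      then show ?thesis using C1 Suc by (simp add: D_def hh_def B_def)
    qed
  qed
  have conv: "\<bar>D i - it k i\<bar> \<le> \<kappa> ^ k * B" for k i
  proof (induction k arbitrary: i)
    case 0 then show ?case using Dbnd by (simp add: it_def)
  next
    case (Suc k)
    have "\<bar>D i - Phi \<beta> \<theta> \<gamma> (it k) i\<bar> \<le> (\<beta> + \<gamma>) / (\<theta> + \<beta> + \<gamma>) * (\<kappa> ^ k * B)"
      by (rule Phi_contr[of \<beta> \<theta> \<gamma> D "it k", OF pos fixD Suc.IH]) (auto simp: D0 it0)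
    then have "\<bar>D i - Phi \<beta> \<theta> \<gamma> (it k) i\<bar> \<le> \<kappa> * (\<kappa> ^ k * B)" by (simp add: \<kappa>_def)
    then show ?case by (simp add: it_def)
  qed
  have Danti: "D (Suc i) \<le> D i" for i
  proof (rule ccontr)
    assume "\<not> D (Suc i) \<le> D i"
    then have d: "0 < D (Suc i) - D i" by simp
    have B0: "0 \<le> B" using Dbnd[of 0] by simp
    obtain k where k: "\<kappa> ^ k < (D (Suc i) - D i) / (2 * B + 1)"
      using real_arch_pow_inv[of "(D (Suc i) - D i) / (2 * B + 1)" \<kappa>] d B0 \<kappa> by auto
    have "\<kappa> ^ k * (2 * B + 1) < D (Suc i) - D i"
      using k B0 by (simp add: pos_less_divide_eq)
    moreover have "D (Suc i) - D i \<le> it k (Suc i) - it k i + 2 * (\<kappa> ^ k * B)"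
      using conv[of "Suc i" k] conv[of i k] by (simp add: abs_le_iff)
    moreover have "0 \<le> \<kappa> ^ k" using \<kappa> by simp
    ultimately show False using itanti[of k i] by (simp add: algebra_simps)
  qed
  have Dle: "D (a + b) \<le> D b" for a b
    by (induction a) (auto intro: order_trans[OF Danti])
  have tele: "hh k = (\<Sum>i<k. D i)" for k
    by (induction k) (auto simp: D_def hh_def)
  have "hh (m+n) = (\<Sum>i<m. D i) + (\<Sum>i<n. D (m+i))"
  proof -
    have a: "sum D {0..<m+n} = sum D {0..<m} + sum D {m..<m+n}"
      by (rule sum.atLeastLessThan_concat[symmetric]) auto
    have b: "sum D {m..<m+n} = (\<Sum>i=0..<n. D (m+i))"
      using sum.shift_bounds_nat_ivl[of D 0 m n] by (simp add: add.commute)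
    show ?thesis unfolding tele using a b by (simp add: lessThan_atLeast0)
  qed
  also have "\<dots> \<le> (\<Sum>i<m. D i) + (\<Sum>i<n. D i)"
    using Dle by (intro add_left_mono sum_mono) auto
  also have "\<dots> = hh m + hh n" by (simp add: tele)
  finally show ?thesis using mn by (simp add: hh_def)
qed


theorem lemma6p4:
  fixes \<beta> \<theta> \<gamma> :: real and h \<pi> :: "nat \<Rightarrow> real"
  assumes "0 < \<beta>" and "0 < \<theta>" and "0 < \<gamma>"
    and "perron_triple \<beta> \<theta> \<gamma> 0 h \<pi>"
  shows "\<forall>m n. 1 \<le> m \<longrightarrow> 1 \<le> n \<longrightarrow> h (m + n) \<le> h m + h n"
proof (intro allI impI)
  fix m n :: nat assume mn: "1 \<le> m" "1 \<le> n"
  have PT: "perron_triple \<beta> \<theta> \<gamma> 0 h \<pi>" by fact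
  obtain c C where cC: "0 < c" "\<forall>n\<ge>1. c \<le> h n \<and> h n \<le> C"
    using PT unfolding perron_triple_def by blast
  have hpos: "\<And>k. 1 \<le> k \<Longrightarrow> 0 < h k" using PT by (simp add: perron_triple_def)
  have harm: "\<And>k. 1 \<le> k \<Longrightarrow> gfi_gen \<beta> \<theta> \<gamma> h k = 0"
    using harmonic[OF assms(1-3) PT] by blast
  have bnd: "\<And>k. 1 \<le> k \<Longrightarrow> \<bar>h k\<bar> \<le> C"
    using cC hpos by (simp add: less_imp_le)
  have h1: "0 \<le> h 1" using hpos[of 1] by simp
  show "h (m + n) \<le> h m + h n"
    by (rule partB[OF assms(1-3) harm bnd h1 mn])
qed


end
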